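(* Let $(X,d)$ be a Hadamard space, $\mathbf a$ a mask, $S$ the associated barycentric scheme, and $(X_n^{\mathbf a})_{n\ge0}$ the characteristic Markov chain of $\mathbf a$. Let $x\in\ell^\infty(\mathbb Z^s,X)$ and $n\in\mathbb N$. Then for every initial distribution $\alpha$ on $\mathbb Z^s$, $$(S^nx)\circ X_0^{\mathbf a}=E\big(x\circ X_n^{\mathbf a}\,\big|\big|\big|\,\mathcal F_0\big)\quad \mathbb P_\alpha\text{-almost surely},$$ where the filtered conditional expectation is taken with respect to the filtration $\mathcal F_0\subseteq\mathcal F_1\subseteq\dots\subseteq\mathcal F_n$ and the measure $\mathbb P_\alpha$.
   Context: Hadamard space: complete metric space $(X,d)$ such that for any $x_0,x_1\in X$ there is $y$ with $d(z,y)^2\le\frac12d(z,x_0)^2+\frac12d(z,x_1)^2-\frac14d(x_0,x_1)^2$ for all $z$. Mask: finitely supported nonnegative $(a_i)_{i\in\mathbb Z^s}$ with $\sum_j a_{i-2j}=1$ for all $i$. Barycentric scheme: $Sx_i=\operatorname{argmin}_{y\in X}\sum_j a_{i-2j}d^2(x_j,y)$ on $\ell^\infty(\mathbb Z^s,X)$. Define $a^{(0)}_i=\delta_{i,0}$ and $a^{(n+1)}_i=\sum_{j}a_{i-2j}a^{(n)}_j$. Characteristic Markov chain: on $\Omega=(\mathbb Z^s)^{\mathbb N_0}$ with product $\sigma$-algebra $\mathcal F$, let $X_n^{\mathbf a}(\omega)=\omega_n$, let $\mathcal F_n$ be the $\sigma$-algebra generated by $X_0^{\mathbf a},\dots,X_n^{\mathbf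 a}$, and for a probability distribution $\alpha$ on $\mathbb Z^s$ let $\mathbb P_\alpha$ be the probability measure with $\mathbb P_\alpha(X_0=i_0,\dots,X_n=i_n)=\alpha_{i_0}\prod_{k=1}^n a_{i_{k-1}-2i_k}$; its $m$-step transition probabilities are $p_{n,n+m}(i,j)=a^{(m)}_{i-2^mj}$. Conditional expectation (Sturm): for a sub-$\sigma$-algebra $\mathcal G$ and a square-integrable $X$-valued random variable $Y$ with separable image, $E(Y|\mathcal G)$ is the a.s. unique $\mathcal G$-measurable square-integrable $Z$ minimizing $Z'\mapsto E\,d^2(Y,Z')$ over $\mathcal G$-measurable square-integrable $Z'$. Filtered conditional expectation: for $\mathcal F_0\subseteq\dots\subseteq\mathcal F_N$ and $\mathcal F_N$-measurable $Y$, $E(Y|||\mathcal F_0)=E(\cdots E(E(Y|\mathcal F_{N-1})|\mathcal F_{N-2})\cdots|\mathcal F_0)$. *)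

theory Defs
  imports "HOL-Probability.Probability"
begin

text \<open>Lattice points of Z^s are modelled as int^'s (dimension s = CARD('s)).\<close>

definition hadamard :: "'a::complete_space itself \<Rightarrow> bool" where
  "hadamard _ \<longleftrightarrow> (\<forall>x0 x1::'a. \<exists>y. \<forall>z.
      (dist z y)^2 \<le> (dist z x0)^2 / 2 + (dist z x1)^2 / 2 - (dist x0 x1)^2 / 4)"

definition mask :: "(int^'s \<Rightarrow> real) \<Rightarrow> bool" where
  "mask a \<longleftrightarrow> finite {i. a i \<noteq> 0} \<and> (\<forall>i. 0 \<le> a i) \<and>
     (\<forall>i. (\<Sum>j\<in>{j. a (i - 2 *s j) \<noteq> 0}. a (i - 2 *s j)) = 1)"

definition bary_scheme :: "(int^'s \<Rightarrow> real) \<Rightarrow> (int^'s \<Rightarrow> 'a::metric_space) \<Rightarrow> int^'s \<Rightarrow> 'a" where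
  "bary_scheme a x i = (SOME y. \<forall>y'.
      (\<Sum>j\<in>{j. a (i - 2 *s j) \<noteq> 0}. a (i - 2 *s j) * (dist (x j) y)^2)
      \<le> (\<Sum>j\<in>{j. a (i - 2 *s j) \<noteq> 0}. a (i - 2 *s j) * (dist (x j) y')^2))"

text \<open>P_alpha: a probability measure on the product sigma algebra of (Z^s)^N with the
  prescribed cylinder probabilities (such a measure is unique).\<close>
definition markov_measure :: "(int^'s \<Rightarrow> real) \<Rightarrow> (int^'s \<Rightarrow> real) \<Rightarrow> (nat \<Rightarrow> int^'s) measure \<Rightarrow> bool" where
  "markov_measure a \<alpha> M \<longleftrightarrow> prob_space M \<and>
     sets M = sets (PiM UNIV (\<lambda>_. count_space UNIV)) \<and>
     (\<forall>n (i::nat \<Rightarrow> int^'s). measure M {\<omega>\<in>space M. \<forall>k\<le>n. \<omega> k = i k}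
        = \<alpha> (i 0) * (\<Prod>k\<in>{1..n}. a (i (k - 1) - 2 *s i k)))"

definition chain_filtration :: "(nat \<Rightarrow> 'b) measure \<Rightarrow> nat \<Rightarrow> (nat \<Rightarrow> 'b) measure" where
  "chain_filtration M k = sigma (space M) {{\<omega>\<in>space M. \<omega> j = i} | j i. j \<le> k}"

definition separable_range :: "('w \<Rightarrow> 'a::topological_space) \<Rightarrow> 'w set \<Rightarrow> bool" where
  "separable_range Y A \<longleftrightarrow> (\<exists>C. countable C \<and> Y ` A \<subseteq> closure C)"

definition L2rv :: "'w measure \<Rightarrow> 'w measure \<Rightarrow> ('w \<Rightarrow> 'a::metric_space) \<Rightarrow> bool" where
  "L2rv M G Z \<longleftrightarrow> Z \<in> measurable G borel \<and> separable_range Z (space M) \<and>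
     (\<exists>z. integrable M (\<lambda>\<omega>. (dist (Z \<omega>) z)^2))"

text \<open>Sturm's conditional expectation: Z is (a version of) E(Y|G).\<close>
definition is_cond_exp :: "'w measure \<Rightarrow> 'w measure \<Rightarrow> ('w \<Rightarrow> 'a::metric_space) \<Rightarrow> ('w \<Rightarrow> 'a) \<Rightarrow> bool" where
  "is_cond_exp M G Y Z \<longleftrightarrow> L2rv M G Z \<and>
     (\<forall>Z'. L2rv M G Z' \<longrightarrow>
        (\<integral>\<omega>. (dist (Y \<omega>) (Z \<omega>))^2 \<partial>M) \<le> (\<integral>\<omega>. (dist (Y \<omega>) (Z' \<omega>))^2 \<partial>M))"

definition is_filtered_cond_exp :: "'w measure \<Rightarrow> (nat \<Rightarrow> 'w measure) \<Rightarrow> nat \<Rightarrow> ('w \<Rightarrow> 'a::metric_space) \<Rightarrow> ('w \<Rightarrow> 'a) \<Rightarrow> bool" where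
  "is_filtered_cond_exp M F N Y Z \<longleftrightarrow> (\<exists>W. W N = Y \<and>
     (\<forall>k<N. is_cond_exp M (F k) (W (Suc k)) (W k)) \<and> Z = W 0)"

end

theory Submission
  imports Defs
begin

lemma bary_exists:
  fixes p :: "'j \<Rightarrow> 'a::complete_space"
  assumes H: "hadamard TYPE('a)" and fin: "finite J" and w0: "\<forall>j\<in>J. 0 \<le> w j"
    and w1: "(\<Sum>j\<in>J. w j) = 1"
  shows "\<exists>y. \<forall>y'. (\<Sum>j\<in>J. w j * (dist (p j) y)^2) \<le> (\<Sum>j\<in>J. w j * (dist (p j) y')^2)"
proof -
  define F where "F y = (\<Sum>j\<in>J. w j * (dist (p j) y)^2)" for y
  have F0: "F y \<ge> 0" for y unfolding F_def using w0 by (intro sum_nonneg) auto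
  have mid: "\<exists>m. F m \<le> F y1/2 + F y2/2 - (dist y1 y2)^2/4" for y1 y2
  proof -
    from H obtain m where m: "\<And>z. (dist z m)^2 \<le> (dist z y1)^2/2 + (dist z y2)^2/2 - (dist y1 y2)^2/4"
      unfolding hadamard_def by blast
    have "F m \<le> (\<Sum>j\<in>J. w j * ((dist (p j) y1)^2/2 + (dist (p j) y2)^2/2 - (dist y1 y2)^2/4))"
      unfolding F_def using w0 m by (intro sum_mono mult_left_mono) auto
    also have "\<dots> = F y1/2 + F y2/2 - (dist y1 y2)^2/4 * (\<Sum>j\<in>J. w j)"
      unfolding F_def by (simp add: algebra_simps sum.distrib sum_subtractf sum_distrib_left sum_distrib_right sum_divide_distrib)
    finally show ?thesis using w1 by auto
  qed
  define c where "c = Inf (range F)"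
  have bdd: "bdd_below (range F)" using F0 by (intro bdd_belowI[of _ 0]) auto
  have cle: "c \<le> F y" for y unfolding c_def using bdd by (intro cInf_lower) auto
  have "\<exists>y. F y < c + 1/(real n+1)" for n
  proof (rule ccontr)
    assume "\<not> ?thesis"
    then have "\<forall>y. c + 1/(real n+1) \<le> F y" by (meson not_less)
    then have "c + 1/(real n+1) \<le> c" unfolding c_def by (intro cInf_greatest) auto
    moreover have "1/(real n+1) > 0" by auto
    ultimately show False by linarith
  qed
  then obtain ys where ys: "\<And>n. F (ys n) < c + 1/(real n+1)" by metis
  have db: "(dist (ys n) (ys m))^2 < 2/(real n+1) + 2/(real m+1)" for n m
  proof -
    obtain mm where "F mm \<le> F (ys n)/2 + F (ys m)/2 - (dist (ys n) (ys m))^2/4" using mid by blast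
    moreover have "c \<le> F mm" by (rule cle)
    moreover have "2/(real n+1) = 2*(1/(real n+1))" "2/(real m+1) = 2*(1/(real m+1))" by auto
    ultimately show ?thesis using ys[of n] ys[of m] by linarith
  qed
  have "Cauchy ys"
  proof (rule metric_CauchyI)
    fix e :: real assume e: "0 < e"
    obtain N :: nat where N: "4 / e^2 < real N" using reals_Archimedean2 by blast
    have "4/(real N+1) < e^2" using N e by (simp add: field_simps) (smt (verit) zero_less_power)
    show "\<exists>M. \<forall>m\<ge>M. \<forall>n\<ge>M. dist (ys m) (ys n) < e"
    proof (intro exI allI impI)
      fix m n assume mn: "N \<le> m" "N \<le> n"
      have "2/(real m+1) \<le> 2/(real N+1)" "2/(real n+1) \<le> 2/(real N+1)" using mn
        by (auto intro!: divide_left_mono)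
      then have "(dist (ys m) (ys n))^2 < e^2" using db[of m n] \<open>4/(real N+1) < e^2\<close> by linarith
      then show "dist (ys m) (ys n) < e" using e by (meson abs_le_square_iff less_le_not_le power2_less_imp_less zero_le_dist)
    qed
  qed
  then obtain y where lim: "ys \<longlonglongrightarrow> y" using Cauchy_convergent_iff convergent_def by blast
  have "(\<lambda>n. F (ys n)) \<longlonglongrightarrow> F y" unfolding F_def
    by (intro tendsto_intros lim)
  moreover have "(\<lambda>n. F (ys n)) \<longlonglongrightarrow> c"
  proof (rule tendsto_sandwich[of "\<lambda>n. c" _ _ "\<lambda>n. c + 1/(real n+1)"])
    show "\<forall>\<^sub>F n in sequentially. c \<le> F (ys n)" using cle by auto
    show "\<forall>\<^sub>F n in sequentially. F (ys n) \<le> c + 1/(real n+1)" using ys less_imp_le by (intro always_eventually) blast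
    show "(\<lambda>n. c) \<longlonglongrightarrow> c" by simp
    have "(\<lambda>n. 1/(real n+1)) \<longlonglongrightarrow> 0" using LIMSEQ_inverse_real_of_nat by (simp add: inverse_eq_divide add.commute)
    then show "(\<lambda>n. c + 1/(real n+1)) \<longlonglongrightarrow> c" using tendsto_add[of "\<lambda>n. c" c sequentially] by fastforce
  qed
  ultimately have "F y = c" using LIMSEQ_unique by blast
  then show ?thesis using cle unfolding F_def by metis
qed

definition JJ :: "(int^'s \<Rightarrow> real) \<Rightarrow> int^'s \<Rightarrow> (int^'s) set" where
  "JJ a i = {j. a (i - 2 *s j) \<noteq> 0}"

lemma JJ_finite: fixes a :: "int^'s \<Rightarrow> real" assumes "mask a" shows "finite (JJ a i)"
proof -
  have "inj (\<lambda>j::int^'s. i - 2 *s j)" by (auto simp: inj_def vec_eq_iff)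
  moreover have "finite {k. a k \<noteq> 0}" using assms unfolding mask_def by auto
  ultimately have "finite ((\<lambda>j::int^'s. i - 2 *s j) -` {k. a k \<noteq> 0})"
    by (intro finite_vimageI) auto
  then show ?thesis unfolding JJ_def by (simp add: vimage_def)
qed

lemma JJ_sum: assumes "mask a" shows "(\<Sum>j\<in>JJ a i. a (i - 2 *s j)) = 1"
  using assms unfolding mask_def JJ_def by auto

lemma JJ_pos: assumes "mask a" "j \<in> JJ a i" shows "0 < a (i - 2 *s j)"
  using assms unfolding mask_def JJ_def by (metis less_eq_real_def mem_Collect_eq)

lemma bary_min:
  fixes x :: "int^'s \<Rightarrow> 'a::complete_space"
  assumes H: "hadamard TYPE('a)" and m: "mask a"
  shows "(\<Sum>j\<in>JJ a i. a (i - 2 *s j) * (dist (x j) (bary_scheme a x i))^2)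
     \<le> (\<Sum>j\<in>JJ a i. a (i - 2 *s j) * (dist (x j) y')^2)"
proof -
  have "\<exists>y. \<forall>y'. (\<Sum>j\<in>JJ a i. a (i - 2 *s j) * (dist (x j) y)^2) \<le> (\<Sum>j\<in>JJ a i. a (i - 2 *s j) * (dist (x j) y')^2)"
    using bary_exists[OF H JJ_finite[OF m] _ JJ_sum[OF m]] JJ_pos[OF m] less_imp_le by blast
  from someI_ex[OF this] show ?thesis unfolding bary_scheme_def JJ_def[symmetric] by blast
qed

lemma bary_bounded:
  fixes x :: "int^'s \<Rightarrow> 'a::complete_space"
  assumes H: "hadamard TYPE('a)" and m: "mask a" and b: "bounded (range x)"
  shows "bounded (range (bary_scheme a x))"
proof -
  fix z :: 'a
  obtain R where R: "\<And>j. dist z (x j) \<le> R" using b unfolding bounded_any_center[of _ z] by auto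
  have R0: "0 \<le> R" using R[of undefined] zero_le_dist[of z "x undefined"] by linarith
  have "dist z (bary_scheme a x i) \<le> 2 * R" for i
  proof -
    define y where "y = bary_scheme a x i"
    have "(\<Sum>j\<in>JJ a i. a (i - 2 *s j) * (dist (x j) y)^2) \<le> (\<Sum>j\<in>JJ a i. a (i - 2 *s j) * (dist (x j) z)^2)"
      unfolding y_def by (rule bary_min[OF H m])
    also have "\<dots> \<le> (\<Sum>j\<in>JJ a i. a (i - 2 *s j) * R^2)"
      using JJ_pos[OF m] R by (intro sum_mono mult_left_mono power_mono) (auto simp: dist_commute less_imp_le)
    also have "\<dots> = R^2" using JJ_sum[OF m, of i] by (simp add: sum_distrib_right[symmetric])
    finally have le: "(\<Sum>j\<in>JJ a i. a (i - 2 *s j) * (dist (x j) y)^2) \<le> R^2" .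
    have "\<exists>j\<in>JJ a i. dist (x j) y \<le> R"
    proof (rule ccontr)
      assume "\<not> ?thesis"
      then have gt: "\<forall>j\<in>JJ a i. R < dist (x j) y" by auto
      have ne: "JJ a i \<noteq> {}" using JJ_sum[OF m, of i] by auto
      have "(\<Sum>j\<in>JJ a i. a (i - 2 *s j) * R^2) < (\<Sum>j\<in>JJ a i. a (i - 2 *s j) * (dist (x j) y)^2)"
        using gt R0 JJ_pos[OF m] by (intro sum_strict_mono[OF JJ_finite[OF m] ne] mult_strict_left_mono power_strict_mono) auto
      moreover have "(\<Sum>j\<in>JJ a i. a (i - 2 *s j) * R^2) = R^2" using JJ_sum[OF m, of i] by (simp add: sum_distrib_right[symmetric])
      ultimately show False using le by linarith
    qed
    then obtain j where "dist (x j) y \<le> R" by blast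
    then have "dist z y \<le> 2 * R" using R[of j] dist_triangle[of z y "x j"] by linarith
    then show ?thesis unfolding y_def .
  qed
  then have "range (bary_scheme a x) \<subseteq> cball z (2*R)" by auto
  then show ?thesis using bounded_cball bounded_subset by blast
qed

lemma bary_pow_bounded:
  fixes x :: "int^'s \<Rightarrow> 'a::complete_space"
  assumes H: "hadamard TYPE('a)" and m: "mask a" and b: "bounded (range x)"
  shows "bounded (range ((bary_scheme a ^^ k) x))"
  by (induction k) (auto intro: bary_bounded[OF H m] b)


definition PP :: "nat \<Rightarrow> (nat \<Rightarrow> 'b) \<Rightarrow> 'b list" where
  "PP K \<omega> = map \<omega> [0..<Suc K]"

lemma PP_length[simp]: "length (PP K \<omega>) = Suc K" unfolding PP_def by simp

lemma PP_nth: "m \<le> K \<Longrightarrow> PP K \<omega> ! m = \<omega> m"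
  unfolding PP_def by (simp del: upt_Suc add: nth_map_upt less_Suc_eq_le)

lemma PP_eq_iff: "PP K \<omega> = xs \<longleftrightarrow> length xs = Suc K \<and> (\<forall>m\<le>K. \<omega> m = xs ! m)"
proof
  assume "PP K \<omega> = xs" then show "length xs = Suc K \<and> (\<forall>m\<le>K. \<omega> m = xs ! m)"
    using PP_nth[of _ K \<omega>] by auto
next
  assume "length xs = Suc K \<and> (\<forall>m\<le>K. \<omega> m = xs ! m)"
  then show "PP K \<omega> = xs" by (auto simp: list_eq_iff_nth_eq PP_nth less_Suc_eq_le)
qed

lemma PP_eq_iff2: "PP K \<omega> = PP K \<omega>' \<longleftrightarrow> (\<forall>m\<le>K. \<omega> m = \<omega>' m)"
  unfolding PP_eq_iff by (auto simp: PP_nth)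

lemma PP_Suc: "PP (Suc K) \<omega> = PP K \<omega> @ [\<omega> (Suc K)]"
  unfolding PP_def by simp

lemma PP_upd: "PP (Suc K) (fun_upd \<omega> (Suc K) j) = PP K \<omega> @ [j]"
  unfolding PP_def by simp

lemma PP_upd2: "PP K (fun_upd \<omega> (Suc K) j) = PP K \<omega>"
  unfolding PP_def by simp

lemma PP_vimage: "PP K -` {xs} = (if length xs = Suc K then (\<Inter>m\<in>{..K}. {\<omega>. \<omega> m = xs ! m}) else {})"
  by (auto simp: PP_nth) (auto simp: PP_eq_iff)

locale mchain =
  fixes a :: "int^'s \<Rightarrow> real" and \<alpha> :: "int^'s \<Rightarrow> real" and M :: "(nat \<Rightarrow> int^'s) measure"
  assumes mm: "markov_measure a \<alpha> M"
begin

lemma sets_M: "sets M = sets (PiM UNIV (\<lambda>_. count_space UNIV))"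
  using mm unfolding markov_measure_def by auto

lemma space_M: "space M = UNIV"
  using sets_eq_imp_space_eq[OF sets_M] by (simp add: space_PiM)

lemma prob_M: "prob_space M" using mm unfolding markov_measure_def by auto

lemma cyl_sets: "{\<omega>. \<omega> j = i} \<in> sets M"
proof -
  have "(\<lambda>\<omega>. \<omega> j) \<in> measurable (PiM UNIV (\<lambda>_. count_space (UNIV::(int^'s) set))) (count_space UNIV)"
    by (rule measurable_component_singleton) auto
  then have "(\<lambda>\<omega>. \<omega> j) \<in> measurable M (count_space UNIV)"
    using measurable_cong_sets[OF sets_M refl] by blast
  from measurable_sets[OF this, of "{i}"] show ?thesis using space_M by (simp add: vimage_def)
qed

lemma PP_meas: "PP K \<in> measurable M (count_space UNIV)"
proof (subst measurable_count_space_eq_countable)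
  show "countable (UNIV :: (int^'s) list set)" by simp
  show "PP K \<in> space M \<rightarrow> UNIV \<and> (\<forall>xs\<in>UNIV. PP K -` {xs} \<inter> space M \<in> sets M)"
    unfolding PP_vimage space_M using cyl_sets by auto
qed

definition FF :: "nat \<Rightarrow> (nat \<Rightarrow> int^'s) measure" where "FF k = chain_filtration M k"

lemma FF_gen: "sets (FF k) = sigma_sets UNIV {{\<omega>. \<omega> j = i} | j i. j \<le> k}"
  unfolding FF_def chain_filtration_def space_M
  by (subst sets_measure_of) auto

lemma FF_space: "space (FF k) = UNIV"
  unfolding FF_def chain_filtration_def space_M
  by (subst space_measure_of) auto

lemma FF_sub: "subalgebra M (FF k)"
proof -
  have "{{\<omega>. \<omega> j = i} |j i. j \<le> k} \<subseteq> sets M" using cyl_sets by blast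
  then have "sigma_sets (space M) {{\<omega>. \<omega> j = i} |j i. j \<le> k} \<subseteq> sets M"
    by (rule sets.sigma_sets_subset)
  then show ?thesis unfolding subalgebra_def FF_space FF_gen using space_M by simp
qed

lemma PP_meas_FF: "PP k \<in> measurable (FF k) (count_space UNIV)"
proof (subst measurable_count_space_eq_countable)
  show "countable (UNIV :: (int^'s) list set)" by simp
  have "(\<Inter>m\<in>{..k}. {\<omega>. \<omega> m = xs ! m}) \<in> sets (FF k)" for xs :: "(int^'s) list"
  proof (rule sets.finite_INT)
    show "\<And>m. m \<in> {..k} \<Longrightarrow> {\<omega>. \<omega> m = xs ! m} \<in> sets (FF k)"
      unfolding FF_gen by (rule sigma_sets.Basic) auto
  qed auto
  then show "PP k \<in> space (FF k) \<rightarrow> UNIV \<and> (\<forall>xs\<in>UNIV. PP k -` {xs} \<inter> space (FF k) \<in> sets (FF k))"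
    unfolding PP_vimage FF_space by auto
qed

lemma FF_saturated:
  assumes "B \<in> sets (FF k)"
  shows "\<forall>\<omega> \<omega>'. PP k \<omega> = PP k \<omega>' \<longrightarrow> \<omega> \<in> B \<longrightarrow> \<omega>' \<in> B"
  using assms unfolding FF_gen
proof (induction rule: sigma_sets.induct)
  case (Basic a)
  then show ?case by (auto simp: PP_eq_iff2)
next
  case Empty
  then show ?case by simp
next
  case (Compl a)
  show ?case
  proof (intro allI impI)
    fix \<omega> \<omega>' assume e: "PP k \<omega> = PP k \<omega>'" and w: "\<omega> \<in> UNIV - a"
    have "\<omega>' \<notin> a"
    proof
      assume "\<omega>' \<in> a" then have "\<omega> \<in> a" using Compl.IH e[symmetric] by blast
      then show False using w by simp
    qed
    then show "\<omega>' \<in> UNIV - a" by simp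
  qed
next
  case (Union A)
  show ?case
  proof (intro allI impI)
    fix \<omega> \<omega>' assume e: "PP k \<omega> = PP k \<omega>'" and w: "\<omega> \<in> \<Union> (range A)"
    then obtain i where "\<omega> \<in> A i" by blast
    then have "\<omega>' \<in> A i" using Union.IH e by blast
    then show "\<omega>' \<in> \<Union> (range A)" by blast
  qed
qed

lemma FF_meas_dep:
  fixes f :: "(nat \<Rightarrow> int^'s) \<Rightarrow> 'a::metric_space"
  assumes "f \<in> measurable (FF k) borel" "PP k \<omega> = PP k \<omega>'"
  shows "f \<omega> = f \<omega>'"
proof -
  have "f -` {f \<omega>} \<inter> space (FF k) \<in> sets (FF k)"
    using assms(1) by (rule measurable_sets) (intro borel_closed closed_singleton)
  then have "f -` {f \<omega>} \<in> sets (FF k)" unfolding FF_space by simp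
  from FF_saturated[OF this, rule_format, OF assms(2)] have "\<omega>' \<in> f -` {f \<omega>}" by simp
  then show ?thesis by simp
qed

lemma comp_PP_meas_FF: "(\<lambda>\<omega>. g (PP k \<omega>)) \<in> measurable (FF k) borel"
  proof (rule measurable_compose[OF PP_meas_FF])
  show "g \<in> measurable (count_space UNIV) borel" by (rule measurable_count_space_eq1[THEN iffD2]) simp
qed

lemma comp_PP_meas: "(\<lambda>\<omega>. g (PP k \<omega>)) \<in> measurable M borel"
  proof (rule measurable_compose[OF PP_meas])
  show "g \<in> measurable (count_space UNIV) borel" by (rule measurable_count_space_eq1[THEN iffD2]) simp
qed

definition ww :: "nat \<Rightarrow> (int^'s) list \<Rightarrow> ennreal" where
  "ww K xs = emeasure M (PP K -` {xs})"

definition wr :: "nat \<Rightarrow> (int^'s) list \<Rightarrow> real" where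
  "wr K xs = \<alpha> (xs ! 0) * (\<Prod>k\<in>{1..K}. a (xs ! (k - 1) - 2 *s xs ! k))"

lemma distr_PP: "distr M (count_space UNIV) (PP K) = density (count_space UNIV) (ww K)"
proof (rule measure_eqI_countable[where A = UNIV])
  show "countable (UNIV :: (int^'s) list set)" by simp
  fix xs :: "(int^'s) list"
  have "emeasure (distr M (count_space UNIV) (PP K)) {xs} = ww K xs"
    by (subst emeasure_distr[OF PP_meas]) (auto simp: ww_def space_M)
  moreover have "emeasure (density (count_space UNIV) (ww K)) {xs} = ww K xs"
    by (subst emeasure_density) auto
  ultimately show "emeasure (distr M (count_space UNIV) (PP K)) {xs} = emeasure (density (count_space UNIV) (ww K)) {xs}"
    by simp
qed auto

lemma int_PP: "(\<integral>\<^sup>+ \<omega>. g (PP K \<omega>) \<partial>M) = (\<integral>\<^sup>+ xs. ww K xs * g xs \<partial>count_space UNIV)"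
proof -
  have "(\<integral>\<^sup>+ \<omega>. g (PP K \<omega>) \<partial>M) = (\<integral>\<^sup>+ xs. g xs \<partial>distr M (count_space UNIV) (PP K))"
    by (subst nn_integral_distr[OF PP_meas]) auto
  also have "\<dots> = (\<integral>\<^sup>+ xs. ww K xs * g xs \<partial>count_space UNIV)"
    unfolding distr_PP by (subst nn_integral_density) auto
  finally show ?thesis .
qed

lemma ww_val: "ww K xs = (if length xs = Suc K then ennreal (wr K xs) else 0)"
proof (cases "length xs = Suc K")
  case True
  have "PP K -` {xs} = {\<omega>\<in>space M. \<forall>k\<le>K. \<omega> k = (\<lambda>m. xs ! m) k}"
    using True by (auto simp: space_M PP_eq_iff PP_nth)
  moreover have "measure M {\<omega>\<in>space M. \<forall>k\<le>K. \<omega> k = (\<lambda>m. xs ! m) k} = wr K xs"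
    using mm unfolding markov_measure_def wr_def by blast
  ultimately show ?thesis using True finite_measure.emeasure_eq_measure[OF prob_space.finite_measure[OF prob_M]] unfolding ww_def by simp
next
  case False
  then have "PP K -` {xs} = {}" by (auto simp: PP_vimage)
  then show ?thesis unfolding ww_def using False by simp
qed

lemma wr_nonneg: "0 \<le> wr K ys"
proof -
  have "measure M {\<omega>\<in>space M. \<forall>k\<le>K. \<omega> k = (\<lambda>m. ys ! m) k} = wr K ys"
    using mm unfolding markov_measure_def wr_def by blast
  moreover have "0 \<le> measure M {\<omega>\<in>space M. \<forall>k\<le>K. \<omega> k = (\<lambda>m. ys ! m) k}" by (rule measure_nonneg)
  ultimately show ?thesis by simp
qed

lemma wr_snoc: assumes "length ys = Suc K"
  shows "wr (Suc K) (ys @ [j]) = wr K ys * a (ys ! K - 2 *s j)"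
proof -
  have "(\<Prod>k\<in>{1..Suc K}. a ((ys @ [j]) ! (k - 1) - 2 *s (ys @ [j]) ! k))
      = (\<Prod>k\<in>{1..K}. a ((ys @ [j]) ! (k - 1) - 2 *s (ys @ [j]) ! k)) * a ((ys @ [j]) ! K - 2 *s (ys @ [j]) ! Suc K)"
    by (simp add: prod.cl_ivl_Suc)
  also have "(\<Prod>k\<in>{1..K}. a ((ys @ [j]) ! (k - 1) - 2 *s (ys @ [j]) ! k)) = (\<Prod>k\<in>{1..K}. a (ys ! (k - 1) - 2 *s ys ! k))"
    using assms by (intro prod.cong) (auto simp: nth_append)
  finally show ?thesis using assms unfolding wr_def by (simp add: nth_append)
qed

lemma count_sum_finite:
  fixes h :: "'b \<Rightarrow> ennreal"
  assumes "finite A" "\<And>j. j \<notin> A \<Longrightarrow> h j = 0"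
  shows "(\<integral>\<^sup>+ j. h j \<partial>count_space UNIV) = (\<Sum>j\<in>A. h j)"
proof -
  have "(\<integral>\<^sup>+ j. h j \<partial>count_space UNIV) = (\<integral>\<^sup>+ j. h j * indicator A j \<partial>count_space UNIV)"
    using assms(2) by (intro nn_integral_cong) (auto split: split_indicator)
  also have "\<dots> = (\<integral>\<^sup>+ j. h j \<partial>count_space A)"
    by (rule nn_integral_count_space_indicator[symmetric]) simp
  also have "\<dots> = (\<Sum>j\<in>A. h j)" using assms(1) by (rule nn_integral_count_space_finite)
  finally show ?thesis .
qed

lemma key_identity:
  fixes f :: "(int^'s) list \<Rightarrow> ennreal"
  assumes ma: "mask a"
  shows "(\<integral>\<^sup>+ \<omega>. f (PP (Suc K) \<omega>) \<partial>M)
    = (\<integral>\<^sup>+ \<omega>. (\<Sum>j\<in>JJ a (\<omega> K). ennreal (a (\<omega> K - 2 *s j)) * f (PP K \<omega> @ [j])) \<partial>M)"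
proof -
  define g where "g ys = (\<Sum>j\<in>JJ a (ys ! K). ennreal (a (ys ! K - 2 *s j)) * f (ys @ [j]))" for ys
  have rhs: "(\<integral>\<^sup>+ \<omega>. (\<Sum>j\<in>JJ a (\<omega> K). ennreal (a (\<omega> K - 2 *s j)) * f (PP K \<omega> @ [j])) \<partial>M)
     = (\<integral>\<^sup>+ ys. ww K ys * g ys \<partial>count_space UNIV)"
  proof -
    have "(\<integral>\<^sup>+ \<omega>. (\<Sum>j\<in>JJ a (\<omega> K). ennreal (a (\<omega> K - 2 *s j)) * f (PP K \<omega> @ [j])) \<partial>M)
       = (\<integral>\<^sup>+ \<omega>. g (PP K \<omega>) \<partial>M)"
      by (rule nn_integral_cong) (simp add: g_def PP_nth)
    then show ?thesis using int_PP[of g K] by (rule trans)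
  qed
  have bij: "bij_betw (\<lambda>(ys, j). ys @ [j]) (UNIV \<times> UNIV) (UNIV - {[] :: (int^'s) list})"
    unfolding bij_betw_def
  proof
    show "inj_on (\<lambda>(ys, j). ys @ [j]) (UNIV \<times> UNIV)" by (clarsimp simp: inj_on_def)
    show "(\<lambda>(ys, j). ys @ [j]) ` (UNIV \<times> UNIV) = UNIV - {[] :: (int^'s) list}"
    proof
      show "(\<lambda>(ys, j). ys @ [j]) ` (UNIV \<times> UNIV) \<subseteq> UNIV - {[] :: (int^'s) list}" by clarsimp
      show "UNIV - {[] :: (int^'s) list} \<subseteq> (\<lambda>(ys, j). ys @ [j]) ` (UNIV \<times> UNIV)"
      proof
        fix xs :: "(int^'s) list" assume "xs \<in> UNIV - {[]}"
        then have "xs = butlast xs @ [last xs]" by simp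
        then show "xs \<in> (\<lambda>(ys, j). ys @ [j]) ` (UNIV \<times> UNIV)" by (intro image_eqI[of _ _ "(butlast xs, last xs)"]) auto
      qed
    qed
  qed
  have "(\<integral>\<^sup>+ \<omega>. f (PP (Suc K) \<omega>) \<partial>M) = (\<integral>\<^sup>+ xs. ww (Suc K) xs * f xs \<partial>count_space UNIV)"
    by (rule int_PP)
  also have "\<dots> = (\<integral>\<^sup>+ xs. ww (Suc K) xs * f xs * indicator (UNIV - {[]}) xs \<partial>count_space UNIV)"
    by (intro nn_integral_cong) (auto split: split_indicator simp: ww_val)
  also have "\<dots> = (\<integral>\<^sup>+ xs. ww (Suc K) xs * f xs \<partial>count_space (UNIV - {[]}))"
    by (rule nn_integral_count_space_indicator[symmetric]) simp
  also have "\<dots> = (\<integral>\<^sup>+ p. ww (Suc K) (fst p @ [snd p]) * f (fst p @ [snd p]) \<partial>count_space (UNIV \<times> UNIV))"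
    using nn_integral_bij_count_space[OF bij, of "\<lambda>xs. ww (Suc K) xs * f xs"]
    by (simp add: case_prod_beta)
  also have "\<dots> = (\<integral>\<^sup>+ p. ww (Suc K) (fst p @ [snd p]) * f (fst p @ [snd p]) \<partial>(count_space UNIV \<Otimes>\<^sub>M count_space UNIV))"
    by (subst pair_measure_countable) auto
  also have "\<dots> = (\<integral>\<^sup>+ ys. \<integral>\<^sup>+ j. ww (Suc K) (ys @ [j]) * f (ys @ [j]) \<partial>count_space UNIV \<partial>count_space UNIV)"
    by (subst sigma_finite_measure.nn_integral_fst[OF sigma_finite_measure_count_space, symmetric])
       (auto simp: pair_measure_countable)
  also have "\<dots> = (\<integral>\<^sup>+ ys. ww K ys * g ys \<partial>count_space UNIV)"
  proof (rule nn_integral_cong)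
    fix ys :: "(int^'s) list"
    show "(\<integral>\<^sup>+ j. ww (Suc K) (ys @ [j]) * f (ys @ [j]) \<partial>count_space UNIV) = ww K ys * g ys"
    proof (cases "length ys = Suc K")
      case True
      have "(\<integral>\<^sup>+ j. ww (Suc K) (ys @ [j]) * f (ys @ [j]) \<partial>count_space UNIV)
          = (\<Sum>j\<in>JJ a (ys ! K). ww (Suc K) (ys @ [j]) * f (ys @ [j]))"
        using True by (intro count_sum_finite JJ_finite[OF ma]) (auto simp: ww_val wr_snoc JJ_def)
      also have "\<dots> = (\<Sum>j\<in>JJ a (ys ! K). ww K ys * (ennreal (a (ys ! K - 2 *s j)) * f (ys @ [j])))"
      proof (rule sum.cong)
        fix j assume "j \<in> JJ a (ys ! K)"
        have "0 \<le> wr K ys" by (rule wr_nonneg)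
        moreover have "0 \<le> a (ys ! K - 2 *s j)" using ma unfolding mask_def by auto
        ultimately show "ww (Suc K) (ys @ [j]) * f (ys @ [j]) = ww K ys * (ennreal (a (ys ! K - 2 *s j)) * f (ys @ [j]))"
          using True by (simp add: ww_val wr_snoc ennreal_mult' mult.assoc)
      qed simp
      also have "\<dots> = ww K ys * g ys" unfolding g_def by (simp add: sum_distrib_left)
      finally show ?thesis .
    next
      case False
      then show ?thesis by (simp add: ww_val)
    qed
  qed
  finally show ?thesis using rhs by simp
qed


end
context mchain begin
definition dep :: "nat \<Rightarrow> ((nat \<Rightarrow> int^'s) \<Rightarrow> 'c) \<Rightarrow> bool" where
  "dep K Z \<longleftrightarrow> (\<forall>\<omega> \<omega>'. PP K \<omega> = PP K \<omega>' \<longrightarrow> Z \<omega> = Z \<omega>')"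

lemma PP_self: "PP K (\<lambda>m. PP K \<omega> ! m) = PP K \<omega>"
  by (simp add: PP_eq_iff PP_nth)

lemma dep_repr: "dep K Z \<Longrightarrow> Z \<omega> = Z (\<lambda>m. PP K \<omega> ! m)"
  unfolding dep_def using PP_self by metis

lemma dep_mono: "dep K Z \<Longrightarrow> K \<le> K' \<Longrightarrow> dep K' Z"
  unfolding dep_def PP_eq_iff2 by (meson order_trans)

lemma dep_meas: assumes "dep K Z" shows "Z \<in> borel_measurable M"
proof -
  have "(\<lambda>\<omega>. (\<lambda>xs. Z (\<lambda>m. xs ! m)) (PP K \<omega>)) \<in> borel_measurable M" by (rule comp_PP_meas)
  moreover have "(\<lambda>\<omega>. (\<lambda>xs. Z (\<lambda>m. xs ! m)) (PP K \<omega>)) = Z" using dep_repr[OF assms] by auto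
  ultimately show ?thesis by simp
qed

lemma dep_meas_FF: assumes "dep K Z" shows "Z \<in> measurable (FF K) borel"
proof -
  have "(\<lambda>\<omega>. (\<lambda>xs. Z (\<lambda>m. xs ! m)) (PP K \<omega>)) \<in> measurable (FF K) borel" by (rule comp_PP_meas_FF)
  moreover have "(\<lambda>\<omega>. (\<lambda>xs. Z (\<lambda>m. xs ! m)) (PP K \<omega>)) = Z" using dep_repr[OF assms] by auto
  ultimately show ?thesis by simp
qed

lemma meas_FF_dep:
  fixes Z :: "(nat \<Rightarrow> int^'s) \<Rightarrow> 'a::metric_space"
  assumes "Z \<in> measurable (FF k) borel" shows "dep k Z"
  unfolding dep_def using FF_meas_dep[OF assms] by blast

lemma dep_countable: assumes "dep K Z" shows "countable (range Z)"
proof -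
  have "range Z \<subseteq> (\<lambda>xs. Z (\<lambda>m. xs ! m)) ` UNIV" using dep_repr[OF assms] by auto
  moreover have "countable ((\<lambda>xs. Z (\<lambda>m. xs ! m)) ` (UNIV :: (int^'s) list set))" by simp
  ultimately show ?thesis using countable_subset by blast
qed

lemma dep_sep: assumes "dep K Z" shows "separable_range Z (space M)"
  unfolding separable_range_def
proof (intro exI[of _ "range Z"] conjI)
  show "countable (range Z)" by (rule dep_countable[OF assms])
  have "Z ` space M \<subseteq> range Z" by auto
  also have "\<dots> \<subseteq> closure (range Z)" by (rule closure_subset)
  finally show "Z ` space M \<subseteq> closure (range Z)" .
qed

lemma dep_comb: "dep K f \<Longrightarrow> dep K g \<Longrightarrow> dep K (\<lambda>\<omega>. F (f \<omega>) (g \<omega>))"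
  unfolding dep_def by metis

lemma integrable_dist2:
  fixes f g :: "(nat \<Rightarrow> int^'s) \<Rightarrow> 'a::metric_space"
  assumes "integrable M (\<lambda>\<omega>. (dist (f \<omega>) p)^2)" "integrable M (\<lambda>\<omega>. (dist (g \<omega>) q)^2)"
    and "(\<lambda>\<omega>. (dist (f \<omega>) (g \<omega>))^2) \<in> borel_measurable M"
  shows "integrable M (\<lambda>\<omega>. (dist (f \<omega>) (g \<omega>))^2)"
proof -
  interpret prob_space M by (rule prob_M)
  define B where "B \<omega> = 3 * (dist (f \<omega>) p)^2 + 3 * (dist p q)^2 + 3 * (dist (g \<omega>) q)^2" for \<omega>
  have iB: "integrable M B"
  proof -
    have "integrable M (\<lambda>\<omega>. 3 * (dist (f \<omega>) p)^2)" using assms(1) by (rule integrable_mult_right)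
    moreover have "integrable M (\<lambda>\<omega>. 3 * (dist (g \<omega>) q)^2)" using assms(2) by (rule integrable_mult_right)
    moreover have "integrable M (\<lambda>\<omega>. 3 * (dist p q)^2)" by simp
    ultimately show ?thesis unfolding B_def by (intro Bochner_Integration.integrable_add)
  qed
  have bd: "AE \<omega> in M. norm ((dist (f \<omega>) (g \<omega>))^2) \<le> norm (B \<omega>)"
  proof (rule AE_I2)
    fix \<omega>
    have t: "dist (f \<omega>) (g \<omega>) \<le> dist (f \<omega>) p + dist p q + dist (g \<omega>) q"
      by (metis add.commute dist_commute dist_triangle2 dist_triangle_le add_mono order_refl)
    have "(dist (f \<omega>) (g \<omega>))^2 \<le> (dist (f \<omega>) p + dist p q + dist (g \<omega>) q)^2"
      using t by (intro power_mono) auto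
    also have "\<dots> \<le> B \<omega>" unfolding B_def
      by (smt (verit) sum_squares_ge_zero power2_sum zero_le_power2 power2_diff)
    finally show "norm ((dist (f \<omega>) (g \<omega>))^2) \<le> norm (B \<omega>)"
      by simp
  qed
  show ?thesis by (rule Bochner_Integration.integrable_bound[OF iB assms(3) bd])
qed

lemma L2rv_bounded:
  fixes Z :: "(nat \<Rightarrow> int^'s) \<Rightarrow> 'a::metric_space"
  assumes "dep k Z" "bounded (range Z)"
  shows "L2rv M (FF k) Z"
proof -
  interpret prob_space M by (rule prob_M)
  fix z :: 'a
  obtain R where R: "\<And>\<omega>. dist z (Z \<omega>) \<le> R" using assms(2) unfolding bounded_any_center[of _ z] by auto
  have bd: "AE \<omega> in M. norm ((dist (Z \<omega>) z)^2) \<le> R^2"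
  proof (rule AE_I2)
    fix \<omega>
    have "(dist (Z \<omega>) z)^2 \<le> R^2" using R[of \<omega>] by (intro power_mono) (auto simp: dist_commute)
    then show "norm ((dist (Z \<omega>) z)^2) \<le> R^2" by simp
  qed
  have "dep k (\<lambda>\<omega>. (dist (Z \<omega>) z)^2)" using assms(1) unfolding dep_def by metis
  then have me: "(\<lambda>\<omega>. (dist (Z \<omega>) z)^2) \<in> borel_measurable M" by (rule dep_meas)
  have "integrable M (\<lambda>\<omega>. (dist (Z \<omega>) z)^2)" by (rule integrable_const_bound[OF bd me])
  then have "\<exists>z. integrable M (\<lambda>\<omega>. (dist (Z \<omega>) z)^2)" by blast
  then show ?thesis unfolding L2rv_def using dep_meas_FF[OF assms(1)] dep_sep[OF assms(1)] by blast
qed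

lemma int_step:
  fixes h :: "int^'s \<Rightarrow> 'a::metric_space" and W :: "(nat \<Rightarrow> int^'s) \<Rightarrow> 'a"
  assumes ma: "mask a" and dW: "dep k W"
  shows "(\<integral>\<^sup>+ \<omega>. ennreal ((dist (h (\<omega> (Suc k))) (W \<omega>))^2) \<partial>M)
       = (\<integral>\<^sup>+ \<omega>. ennreal (\<Sum>j\<in>JJ a (\<omega> k). a (\<omega> k - 2 *s j) * (dist (h j) (W \<omega>))^2) \<partial>M)"
proof -
  define f where "f xs = ennreal ((dist (h (last xs)) (W (\<lambda>m. butlast xs ! m)))^2)" for xs
  have rep: "W (\<lambda>m. PP k \<omega> ! m) = W \<omega>" for \<omega> using dep_repr[OF dW, of \<omega>] by simp
  have "(\<integral>\<^sup>+ \<omega>. ennreal ((dist (h (\<omega> (Suc k))) (W \<omega>))^2) \<partial>M) = (\<integral>\<^sup>+ \<omega>. f (PP (Suc k) \<omega>) \<partial>M)"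
    by (rule nn_integral_cong) (simp add: f_def PP_Suc rep)
  also have "\<dots> = (\<integral>\<^sup>+ \<omega>. (\<Sum>j\<in>JJ a (\<omega> k). ennreal (a (\<omega> k - 2 *s j)) * f (PP k \<omega> @ [j])) \<partial>M)"
    by (rule key_identity[OF ma])
  also have "\<dots> = (\<integral>\<^sup>+ \<omega>. ennreal (\<Sum>j\<in>JJ a (\<omega> k). a (\<omega> k - 2 *s j) * (dist (h j) (W \<omega>))^2) \<partial>M)"
  proof (rule nn_integral_cong)
    fix \<omega> :: "nat \<Rightarrow> int^'s"
    have nn: "0 \<le> a (\<omega> k - 2 *s j)" for j using ma unfolding mask_def by auto
    have "(\<Sum>j\<in>JJ a (\<omega> k). ennreal (a (\<omega> k - 2 *s j)) * f (PP k \<omega> @ [j]))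
        = (\<Sum>j\<in>JJ a (\<omega> k). ennreal (a (\<omega> k - 2 *s j) * (dist (h j) (W \<omega>))^2))"
      by (intro sum.cong refl) (simp add: f_def rep ennreal_mult'[OF nn])
    also have "\<dots> = ennreal (\<Sum>j\<in>JJ a (\<omega> k). a (\<omega> k - 2 *s j) * (dist (h j) (W \<omega>))^2)"
      using nn by (intro sum_ennreal) simp
    finally show "(\<Sum>j\<in>JJ a (\<omega> k). ennreal (a (\<omega> k - 2 *s j)) * f (PP k \<omega> @ [j]))
        = ennreal (\<Sum>j\<in>JJ a (\<omega> k). a (\<omega> k - 2 *s j) * (dist (h j) (W \<omega>))^2)" .
  qed
  finally show ?thesis .
qed

lemma L2rv_dep:
  fixes Z :: "(nat \<Rightarrow> int^'s) \<Rightarrow> 'a::metric_space"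
  assumes "L2rv M (FF k) Z" shows "dep k Z"
  using assms unfolding L2rv_def by (intro meas_FF_dep) blast

lemma dist2_meas:
  fixes f g :: "(nat \<Rightarrow> int^'s) \<Rightarrow> 'a::metric_space"
  assumes "dep K f" "dep K g"
  shows "(\<lambda>\<omega>. (dist (f \<omega>) (g \<omega>))^2) \<in> borel_measurable M"
proof (rule dep_meas)
  show "dep K (\<lambda>\<omega>. (dist (f \<omega>) (g \<omega>))^2)" using assms unfolding dep_def by metis
qed

lemma cond_step_exists:
  fixes h :: "int^'s \<Rightarrow> 'a::complete_space"
  assumes H: "hadamard TYPE('a)" and ma: "mask a" and hb: "bounded (range h)"
  shows "is_cond_exp M (FF k) (\<lambda>\<omega>. h (\<omega> (Suc k))) (\<lambda>\<omega>. bary_scheme a h (\<omega> k))"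
proof -
  interpret prob_space M by (rule prob_M)
  define Y where "Y \<omega> = h (\<omega> (Suc k))" for \<omega> :: "nat \<Rightarrow> int^'s"
  define Z where "Z \<omega> = bary_scheme a h (\<omega> k)" for \<omega> :: "nat \<Rightarrow> int^'s"
  have dY: "dep (Suc k) Y" unfolding dep_def Y_def PP_eq_iff2 by auto
  have dZ: "dep k Z" unfolding dep_def Z_def PP_eq_iff2 by auto
  have "range Y \<subseteq> range h" unfolding Y_def by auto
  then have bY: "bounded (range Y)" using hb bounded_subset by blast
  have "range Z \<subseteq> range (bary_scheme a h)" unfolding Z_def by auto
  then have bZ: "bounded (range Z)" using bary_bounded[OF H ma hb] bounded_subset by blast
  have L2Z: "L2rv M (FF k) Z" by (rule L2rv_bounded[OF dZ bZ])
  have "L2rv M (FF (Suc k)) Y" by (rule L2rv_bounded[OF dY bY])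
  then obtain y where iY: "integrable M (\<lambda>\<omega>. (dist (Y \<omega>) y)^2)" unfolding L2rv_def by blast
  from L2Z obtain z where iZ: "integrable M (\<lambda>\<omega>. (dist (Z \<omega>) z)^2)" unfolding L2rv_def by blast
  have dZs: "dep (Suc k) Z" using dZ by (rule dep_mono) simp
  have ipsi: "integrable M (\<lambda>\<omega>. (dist (Y \<omega>) (Z \<omega>))^2)"
    by (rule integrable_dist2[OF iY iZ dist2_meas[OF dY dZs]])
  have "\<forall>Z'. L2rv M (FF k) Z' \<longrightarrow> (\<integral>\<omega>. (dist (Y \<omega>) (Z \<omega>))^2 \<partial>M) \<le> (\<integral>\<omega>. (dist (Y \<omega>) (Z' \<omega>))^2 \<partial>M)"
  proof (intro allI impI)
    fix Z' :: "(nat \<Rightarrow> int^'s) \<Rightarrow> 'a" assume L2: "L2rv M (FF k) Z'"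
    have dZ': "dep k Z'" by (rule L2rv_dep[OF L2])
    have dZ's: "dep (Suc k) Z'" using dZ' by (rule dep_mono) simp
    from L2 obtain z' where iZ': "integrable M (\<lambda>\<omega>. (dist (Z' \<omega>) z')^2)" unfolding L2rv_def by blast
    have iphi: "integrable M (\<lambda>\<omega>. (dist (Y \<omega>) (Z' \<omega>))^2)"
      by (rule integrable_dist2[OF iY iZ' dist2_meas[OF dY dZ's]])
    have "(\<integral>\<^sup>+ \<omega>. ennreal ((dist (Y \<omega>) (Z \<omega>))^2) \<partial>M) \<le> (\<integral>\<^sup>+ \<omega>. ennreal ((dist (Y \<omega>) (Z' \<omega>))^2) \<partial>M)"
      unfolding Y_def int_step[OF ma dZ] int_step[OF ma dZ']
    proof (rule nn_integral_mono, rule ennreal_leI)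
      fix \<omega> :: "nat \<Rightarrow> int^'s"
      show "(\<Sum>j\<in>JJ a (\<omega> k). a (\<omega> k - 2 *s j) * (dist (h j) (Z \<omega>))^2)
          \<le> (\<Sum>j\<in>JJ a (\<omega> k). a (\<omega> k - 2 *s j) * (dist (h j) (Z' \<omega>))^2)"
        unfolding Z_def by (rule bary_min[OF H ma])
    qed
    moreover have "(\<integral>\<^sup>+ \<omega>. ennreal ((dist (Y \<omega>) (Z \<omega>))^2) \<partial>M) = ennreal (\<integral>\<omega>. (dist (Y \<omega>) (Z \<omega>))^2 \<partial>M)"
      by (rule nn_integral_eq_integral[OF ipsi]) simp
    moreover have "(\<integral>\<^sup>+ \<omega>. ennreal ((dist (Y \<omega>) (Z' \<omega>))^2) \<partial>M) = ennreal (\<integral>\<omega>. (dist (Y \<omega>) (Z' \<omega>))^2 \<partial>M)"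
      by (rule nn_integral_eq_integral[OF iphi]) simp
    moreover have "0 \<le> (\<integral>\<omega>. (dist (Y \<omega>) (Z' \<omega>))^2 \<partial>M)" by (rule integral_nonneg_AE) simp
    ultimately show "(\<integral>\<omega>. (dist (Y \<omega>) (Z \<omega>))^2 \<partial>M) \<le> (\<integral>\<omega>. (dist (Y \<omega>) (Z' \<omega>))^2 \<partial>M)"
      by simp
  qed
  then show ?thesis unfolding is_cond_exp_def using L2Z unfolding Y_def Z_def by blast
qed

lemma cond_unique:
  fixes Y Z1 Z2 :: "(nat \<Rightarrow> int^'s) \<Rightarrow> 'a::complete_space"
  assumes H: "hadamard TYPE('a)" and c1: "is_cond_exp M (FF k) Y Z1" and c2: "is_cond_exp M (FF k) Y Z2"
    and dY: "dep (Suc k) Y" and iY: "integrable M (\<lambda>\<omega>. (dist (Y \<omega>) y)^2)"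
  shows "AE \<omega> in M. Z1 \<omega> = Z2 \<omega>"
proof -
  interpret prob_space M by (rule prob_M)
  have L1: "L2rv M (FF k) Z1" and L2: "L2rv M (FF k) Z2" using c1 c2 unfolding is_cond_exp_def by auto
  have d1: "dep (Suc k) Z1" using L2rv_dep[OF L1] by (rule dep_mono) simp
  have d2: "dep (Suc k) Z2" using L2rv_dep[OF L2] by (rule dep_mono) simp
  obtain z1 where i1: "integrable M (\<lambda>\<omega>. (dist (Z1 \<omega>) z1)^2)" using L1 unfolding L2rv_def by blast
  obtain z2 where i2: "integrable M (\<lambda>\<omega>. (dist (Z2 \<omega>) z2)^2)" using L2 unfolding L2rv_def by blast
  define mid where "mid p q = (SOME m. \<forall>z. (dist z m)^2 \<le> (dist z p)^2/2 + (dist z q)^2/2 - (dist p q)^2/4)" for p q :: 'a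
  have midp: "(dist z (mid p q))^2 \<le> (dist z p)^2/2 + (dist z q)^2/2 - (dist p q)^2/4" for z p q
  proof -
    have "\<exists>m. \<forall>z. (dist z m)^2 \<le> (dist z p)^2/2 + (dist z q)^2/2 - (dist p q)^2/4"
      using H unfolding hadamard_def by blast
    from someI_ex[OF this] show ?thesis unfolding mid_def by blast
  qed
  define Mi where "Mi \<omega> = mid (Z1 \<omega>) (Z2 \<omega>)" for \<omega>
  have dMi0: "dep k Mi" unfolding Mi_def using L2rv_dep[OF L1] L2rv_dep[OF L2] by (rule dep_comb)
  have dMi: "dep (Suc k) Mi" using dMi0 by (rule dep_mono) simp
  have c0: "integrable M (\<lambda>\<omega>. (dist z1 z1)^2)" by simp
  have i21: "integrable M (\<lambda>\<omega>. (dist (Z2 \<omega>) z1)^2)"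
  proof (rule integrable_dist2[OF i2 c0])
    show "(\<lambda>\<omega>. (dist (Z2 \<omega>) z1)^2) \<in> borel_measurable M"
      by (rule dist2_meas[OF d2]) (simp add: dep_def)
  qed
  have iMi: "integrable M (\<lambda>\<omega>. (dist (Mi \<omega>) z1)^2)"
  proof (rule Bochner_Integration.integrable_bound)
    show "integrable M (\<lambda>\<omega>. (dist (Z1 \<omega>) z1)^2/2 + (dist (Z2 \<omega>) z1)^2/2)"
      using i1 i21 by (intro Bochner_Integration.integrable_add integrable_divide)
    show "(\<lambda>\<omega>. (dist (Mi \<omega>) z1)^2) \<in> borel_measurable M"
      by (rule dist2_meas[OF dMi]) (simp add: dep_def)
    show "AE \<omega> in M. norm ((dist (Mi \<omega>) z1)^2) \<le> norm ((dist (Z1 \<omega>) z1)^2/2 + (dist (Z2 \<omega>) z1)^2/2)"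
    proof (rule AE_I2)
      fix \<omega>
      have "(dist z1 (Mi \<omega>))^2 \<le> (dist z1 (Z1 \<omega>))^2/2 + (dist z1 (Z2 \<omega>))^2/2 - (dist (Z1 \<omega>) (Z2 \<omega>))^2/4"
        unfolding Mi_def by (rule midp)
      then have "(dist z1 (Mi \<omega>))^2 \<le> (dist z1 (Z1 \<omega>))^2/2 + (dist z1 (Z2 \<omega>))^2/2"
        using zero_le_power2[of "dist (Z1 \<omega>) (Z2 \<omega>)"] by linarith
      then have "(dist (Mi \<omega>) z1)^2 \<le> (dist (Z1 \<omega>) z1)^2/2 + (dist (Z2 \<omega>) z1)^2/2"
        by (simp add: dist_commute)
      then show "norm ((dist (Mi \<omega>) z1)^2) \<le> norm ((dist (Z1 \<omega>) z1)^2/2 + (dist (Z2 \<omega>) z1)^2/2)"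
        by simp
    qed
  qed
  have LMi: "L2rv M (FF k) Mi" unfolding L2rv_def using dep_meas_FF[OF dMi0] dep_sep[OF dMi0] iMi by blast
  have iY1: "integrable M (\<lambda>\<omega>. (dist (Y \<omega>) (Z1 \<omega>))^2)" by (rule integrable_dist2[OF iY i1 dist2_meas[OF dY d1]])
  have iY2: "integrable M (\<lambda>\<omega>. (dist (Y \<omega>) (Z2 \<omega>))^2)" by (rule integrable_dist2[OF iY i2 dist2_meas[OF dY d2]])
  have iYM: "integrable M (\<lambda>\<omega>. (dist (Y \<omega>) (Mi \<omega>))^2)" by (rule integrable_dist2[OF iY iMi dist2_meas[OF dY dMi]])
  have i12: "integrable M (\<lambda>\<omega>. (dist (Z1 \<omega>) (Z2 \<omega>))^2)" by (rule integrable_dist2[OF i1 i2 dist2_meas[OF d1 d2]])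
  have le1: "(\<integral>\<omega>. (dist (Y \<omega>) (Z1 \<omega>))^2 \<partial>M) \<le> (\<integral>\<omega>. (dist (Y \<omega>) (Mi \<omega>))^2 \<partial>M)"
    using c1 LMi unfolding is_cond_exp_def by blast
  have le2: "(\<integral>\<omega>. (dist (Y \<omega>) (Z2 \<omega>))^2 \<partial>M) \<le> (\<integral>\<omega>. (dist (Y \<omega>) (Z1 \<omega>))^2 \<partial>M)"
    using c2 L1 unfolding is_cond_exp_def by blast
  have "(\<integral>\<omega>. 4 * (dist (Y \<omega>) (Mi \<omega>))^2 + (dist (Z1 \<omega>) (Z2 \<omega>))^2 \<partial>M)
      \<le> (\<integral>\<omega>. 2 * (dist (Y \<omega>) (Z1 \<omega>))^2 + 2 * (dist (Y \<omega>) (Z2 \<omega>))^2 \<partial>M)"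
  proof (rule integral_mono)
    show "integrable M (\<lambda>\<omega>. 4 * (dist (Y \<omega>) (Mi \<omega>))^2 + (dist (Z1 \<omega>) (Z2 \<omega>))^2)"
      using iYM i12 by (intro Bochner_Integration.integrable_add integrable_mult_right)
    show "integrable M (\<lambda>\<omega>. 2 * (dist (Y \<omega>) (Z1 \<omega>))^2 + 2 * (dist (Y \<omega>) (Z2 \<omega>))^2)"
      using iY1 iY2 by (intro Bochner_Integration.integrable_add integrable_mult_right)
    fix \<omega>
    have "(dist (Y \<omega>) (Mi \<omega>))^2 \<le> (dist (Y \<omega>) (Z1 \<omega>))^2/2 + (dist (Y \<omega>) (Z2 \<omega>))^2/2 - (dist (Z1 \<omega>) (Z2 \<omega>))^2/4"
      unfolding Mi_def by (rule midp)
    then show "4 * (dist (Y \<omega>) (Mi \<omega>))^2 + (dist (Z1 \<omega>) (Z2 \<omega>))^2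
      \<le> 2 * (dist (Y \<omega>) (Z1 \<omega>))^2 + 2 * (dist (Y \<omega>) (Z2 \<omega>))^2" by simp
  qed
  also have "(\<integral>\<omega>. 4 * (dist (Y \<omega>) (Mi \<omega>))^2 + (dist (Z1 \<omega>) (Z2 \<omega>))^2 \<partial>M)
     = 4 * (\<integral>\<omega>. (dist (Y \<omega>) (Mi \<omega>))^2 \<partial>M) + (\<integral>\<omega>. (dist (Z1 \<omega>) (Z2 \<omega>))^2 \<partial>M)"
    using iYM i12 by (subst Bochner_Integration.integral_add) auto
  also have "(\<integral>\<omega>. 2 * (dist (Y \<omega>) (Z1 \<omega>))^2 + 2 * (dist (Y \<omega>) (Z2 \<omega>))^2 \<partial>M)
     = 2 * (\<integral>\<omega>. (dist (Y \<omega>) (Z1 \<omega>))^2 \<partial>M) + 2 * (\<integral>\<omega>. (dist (Y \<omega>) (Z2 \<omega>))^2 \<partial>M)"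
    using iY1 iY2 by (subst Bochner_Integration.integral_add) auto
  finally have "(\<integral>\<omega>. (dist (Z1 \<omega>) (Z2 \<omega>))^2 \<partial>M) \<le> 0" using le1 le2 by linarith
  moreover have "0 \<le> (\<integral>\<omega>. (dist (Z1 \<omega>) (Z2 \<omega>))^2 \<partial>M)" by (rule integral_nonneg_AE) simp
  ultimately have "(\<integral>\<omega>. (dist (Z1 \<omega>) (Z2 \<omega>))^2 \<partial>M) = 0" by linarith
  then have "AE \<omega> in M. (dist (Z1 \<omega>) (Z2 \<omega>))^2 = 0"
    using integral_nonneg_eq_0_iff_AE[OF i12] by simp
  then show ?thesis by eventually_elim simp
qed

lemma cond_cong:
  fixes Y1 Y2 Z :: "(nat \<Rightarrow> int^'s) \<Rightarrow> 'a::metric_space"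
  assumes c: "is_cond_exp M (FF k) Y1 Z" and ae: "AE \<omega> in M. Y1 \<omega> = Y2 \<omega>"
    and d1: "dep (Suc k) Y1" and d2: "dep (Suc k) Y2"
  shows "is_cond_exp M (FF k) Y2 Z"
proof -
  have eq: "(\<integral>\<omega>. (dist (Y1 \<omega>) (W \<omega>))^2 \<partial>M) = (\<integral>\<omega>. (dist (Y2 \<omega>) (W \<omega>))^2 \<partial>M)"
    if "L2rv M (FF k) W" for W
  proof -
    have dW: "dep (Suc k) W" using L2rv_dep[OF that] by (rule dep_mono) simp
    show ?thesis
    proof (rule integral_cong_AE[OF dist2_meas[OF d1 dW] dist2_meas[OF d2 dW]])
      show "AE \<omega> in M. (dist (Y1 \<omega>) (W \<omega>))^2 = (dist (Y2 \<omega>) (W \<omega>))^2"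
        using ae by eventually_elim simp
    qed
  qed
  have LZ: "L2rv M (FF k) Z" using c unfolding is_cond_exp_def by blast
  have "\<forall>Z'. L2rv M (FF k) Z' \<longrightarrow> (\<integral>\<omega>. (dist (Y2 \<omega>) (Z \<omega>))^2 \<partial>M) \<le> (\<integral>\<omega>. (dist (Y2 \<omega>) (Z' \<omega>))^2 \<partial>M)"
  proof (intro allI impI)
    fix Z' :: "(nat \<Rightarrow> int^'s) \<Rightarrow> 'a" assume L: "L2rv M (FF k) Z'"
    have "(\<integral>\<omega>. (dist (Y1 \<omega>) (Z \<omega>))^2 \<partial>M) \<le> (\<integral>\<omega>. (dist (Y1 \<omega>) (Z' \<omega>))^2 \<partial>M)"
      using c L unfolding is_cond_exp_def by blast
    then show "(\<integral>\<omega>. (dist (Y2 \<omega>) (Z \<omega>))^2 \<partial>M) \<le> (\<integral>\<omega>. (dist (Y2 \<omega>) (Z' \<omega>))^2 \<partial>M)"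
      using eq[OF LZ] eq[OF L] by simp
  qed
  then show ?thesis using LZ unfolding is_cond_exp_def by blast
qed

end

theorem mainTheorem2:
  fixes a :: "int^'s \<Rightarrow> real" and x :: "int^'s \<Rightarrow> 'a::complete_space"
    and \<alpha> :: "int^'s \<Rightarrow> real" and M :: "(nat \<Rightarrow> int^'s) measure" and n :: nat
  assumes "hadamard TYPE('a)"
    and "mask a"
    and "bounded (range x)"
    and "\<forall>i. 0 \<le> \<alpha> i" and "(\<alpha> has_sum 1) UNIV"
    and "markov_measure a \<alpha> M"
  shows "(\<exists>Z. is_filtered_cond_exp M (chain_filtration M) n (\<lambda>\<omega>. x (\<omega> n)) Z) \<and>
         (\<forall>Z. is_filtered_cond_exp M (chain_filtration M) n (\<lambda>\<omega>. x (\<omega> n)) Z \<longrightarrow>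
            (AE \<omega> in M. ((bary_scheme a ^^ n) x) (\<omega> 0) = Z \<omega>))"
proof -
  note H = assms(1) and ma = assms(2) and xb = assms(3)
  interpret mchain a \<alpha> M using assms(6) by unfold_locales
  define V where "V k \<omega> = ((bary_scheme a ^^ (n - k)) x) (\<omega> k)" for k and \<omega> :: "nat \<Rightarrow> int^'s"
  have FFe: "chain_filtration M = FF" by (rule ext) (simp add: FF_def)
  have hb: "bounded (range ((bary_scheme a ^^ m) x))" for m by (rule bary_pow_bounded[OF H ma xb])
  have step: "is_cond_exp M (FF k) (V (Suc k)) (V k)" if "k < n" for k
  proof -
    have e: "n - k = Suc (n - Suc k)" using that by simp
    have "is_cond_exp M (FF k) (\<lambda>\<omega>. ((bary_scheme a ^^ (n - Suc k)) x) (\<omega> (Suc k)))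
        (\<lambda>\<omega>. bary_scheme a ((bary_scheme a ^^ (n - Suc k)) x) (\<omega> k))"
      by (rule cond_step_exists[OF H ma hb])
    moreover have "(\<lambda>\<omega>. bary_scheme a ((bary_scheme a ^^ (n - Suc k)) x) (\<omega> k)) = V k"
      unfolding V_def e by (rule ext) simp
    moreover have "(\<lambda>\<omega>. ((bary_scheme a ^^ (n - Suc k)) x) (\<omega> (Suc k))) = V (Suc k)"
      unfolding V_def by (rule ext) simp
    ultimately show ?thesis by simp
  qed
  have dV: "dep k (V k)" for k unfolding dep_def V_def PP_eq_iff2 by auto
  have iV: "\<exists>y. integrable M (\<lambda>\<omega>. (dist (V k \<omega>) y)^2)" for k
  proof -
    have "range (V k) \<subseteq> range ((bary_scheme a ^^ (n - k)) x)" unfolding V_def by auto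
    then have "bounded (range (V k))" using hb bounded_subset by blast
    then have "L2rv M (FF k) (V k)" by (rule L2rv_bounded[OF dV])
    then show ?thesis unfolding L2rv_def by blast
  qed
  have Vn: "V n = (\<lambda>\<omega>. x (\<omega> n))" unfolding V_def by (rule ext) simp
  have ex: "is_filtered_cond_exp M (chain_filtration M) n (\<lambda>\<omega>. x (\<omega> n)) (V 0)"
    unfolding is_filtered_cond_exp_def FFe using Vn step by blast
  have un: "AE \<omega> in M. ((bary_scheme a ^^ n) x) (\<omega> 0) = Z \<omega>"
    if fc: "is_filtered_cond_exp M (chain_filtration M) n (\<lambda>\<omega>. x (\<omega> n)) Z" for Z
  proof -
    obtain W where Wn: "W n = (\<lambda>\<omega>. x (\<omega> n))" and Wc: "\<And>k. k < n \<Longrightarrow> is_cond_exp M (FF k) (W (Suc k)) (W k)"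
      and Z0: "Z = W 0"
      using fc unfolding is_filtered_cond_exp_def FFe by blast
    have dW: "dep k (W k)" if "k \<le> n" for k
    proof (cases "k = n")
      case True
      then show ?thesis unfolding dep_def PP_eq_iff2 by (simp add: Wn)
    next
      case False
      then have "k < n" using that by simp
      then have "L2rv M (FF k) (W k)" using Wc[of k] unfolding is_cond_exp_def by blast
      then show ?thesis by (rule L2rv_dep)
    qed
    have "d \<le> n \<Longrightarrow> (AE \<omega> in M. W (n - d) \<omega> = V (n - d) \<omega>)" for d
    proof (induction d)
      case 0
      then show ?case using Wn Vn by simp
    next
      case (Suc d)
      define k where "k = n - Suc d"
      have kn: "k < n" and sk: "Suc k = n - d" using Suc.prems unfolding k_def by auto
      have IH: "AE \<omega> in M. W (Suc k) \<omega> = V (Suc k) \<omega>" using Suc.IH Suc.prems sk by simp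
      have "is_cond_exp M (FF k) (V (Suc k)) (W k)"
        by (rule cond_cong[OF Wc[OF kn] IH dW dV]) (use kn in simp)
      moreover obtain y where "integrable M (\<lambda>\<omega>. (dist (V (Suc k) \<omega>) y)^2)" using iV by blast
      ultimately have "AE \<omega> in M. W k \<omega> = V k \<omega>"
        by (intro cond_unique[OF H _ step[OF kn] dV]) auto
      then show ?case unfolding k_def by simp
    qed
    from this[of n] have "AE \<omega> in M. W 0 \<omega> = V 0 \<omega>" by simp
    then show ?thesis unfolding Z0 V_def by (simp add: eq_commute)
  qed
  show ?thesis using ex un by blast
qed

end
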